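(* Let $K$ be any field, $1\le d\le n$, $N \ge n+d$, and $I = (S_N.\,e_n^d(x_1,\dots,x_n)) \subseteq K[x_1,\dots,x_N]$. Then $$(x_1 - x_{n+1})(x_2 - x_{n+2})\cdots(x_d - x_{n+d}) \in I.$$
   Context: $e_n^d(x_1,\dots,x_n)$ denotes the elementary symmetric polynomial of degree $d$ in $x_1,\dots,x_n$; $(S_N.g)$ denotes the ideal generated by the orbit of $g$ under the permutation action of $S_N$ on the variables. *)

theory Defs
  imports "HOL-Library.Poly_Mapping" "HOL-Combinatorics.Permutations"
begin

text \<open>Multivariate polynomials over K in variables x_1, x_2, ... (indexed by nat):
  a polynomial maps monomials (exponent vectors nat \<Rightarrow>0 nat) to coefficients.\<close>
type_synonym 'a mpoly = "(nat \<Rightarrow>\<^sub>0 nat) \<Rightarrow>\<^sub>0 'a"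

definition Var :: "nat \<Rightarrow> 'a::comm_ring_1 mpoly" where
  "Var i = Poly_Mapping.single (Poly_Mapping.single i 1) 1"

definition Const :: "'a::comm_ring_1 \<Rightarrow> 'a mpoly" where
  "Const c = Poly_Mapping.single 0 c"

definition vars :: "'a::comm_ring_1 mpoly \<Rightarrow> nat set" where
  "vars p = \<Union> (Poly_Mapping.keys ` Poly_Mapping.keys p)"

definition polyring :: "nat \<Rightarrow> 'a::comm_ring_1 mpoly set" where
  "polyring N = {p. vars p \<subseteq> {1..N}}"

definition perm_act :: "(nat \<Rightarrow> nat) \<Rightarrow> 'a::comm_ring_1 mpoly \<Rightarrow> 'a mpoly" where
  "perm_act \<sigma> p = (\<Sum>m\<in>Poly_Mapping.keys p.
      Const (Poly_Mapping.lookup p m) *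
      (\<Prod>i\<in>Poly_Mapping.keys m. Var (\<sigma> i) ^ Poly_Mapping.lookup m i))"

definition elem_sym :: "nat \<Rightarrow> nat \<Rightarrow> 'a::comm_ring_1 mpoly" where
  "elem_sym n d = (\<Sum>S\<in>{S. S \<subseteq> {1..n} \<and> card S = d}. \<Prod>i\<in>S. Var i)"

definition ideal_gen :: "'a::comm_ring_1 mpoly set \<Rightarrow> 'a mpoly set \<Rightarrow> 'a mpoly set" where
  "ideal_gen R G = {(\<Sum>g\<in>T. r g * g) | T r. finite T \<and> T \<subseteq> G \<and> (\<forall>g\<in>T. r g \<in> R)}"

definition orbit_ideal :: "nat \<Rightarrow> 'a::comm_ring_1 mpoly \<Rightarrow> 'a mpoly set" where
  "orbit_ideal N g = ideal_gen (polyring N) {perm_act \<sigma> g | \<sigma>. \<sigma> permutes {1..N}}"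

end

theory Submission imports Defs "HOL-Combinatorics.Permutations" begin

definition Esym :: "nat set \<Rightarrow> nat \<Rightarrow> (nat \<Rightarrow> 'a::comm_ring_1) \<Rightarrow> 'a" where
  "Esym A k h = (\<Sum>S\<in>{S. S \<subseteq> A \<and> card S = k}. \<Prod>i\<in>S. h i)"

lemma Esym_0: "finite A \<Longrightarrow> Esym A 0 h = 1"
proof -
  assume "finite A"
  then have "{S. S \<subseteq> A \<and> card S = 0} = {{}}" by (auto dest: finite_subset)
  then show ?thesis by (simp add: Esym_def)
qed

lemma Esym_insert:
  assumes "finite A" "a \<notin> A"
  shows "Esym (insert a A) (Suc k) h = h a * Esym A k h + Esym A (Suc k) h"
proof -
  have split: "{S. S \<subseteq> insert a A \<and> card S = Suc k} =
     insert a ` {S. S \<subseteq> A \<and> card S = k} \<union> {S. S \<subseteq> A \<and> card S = Suc k}"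
  proof (intro set_eqI iffI)
    fix S assume S: "S \<in> {S. S \<subseteq> insert a A \<and> card S = Suc k}"
    show "S \<in> insert a ` {S. S \<subseteq> A \<and> card S = k} \<union> {S. S \<subseteq> A \<and> card S = Suc k}"
    proof (cases "a \<in> S")
      case True
      have fin: "finite S" using S assms(1) by (auto dest: finite_subset)
      have "S = insert a (S - {a})" using True by auto
      moreover have "S - {a} \<subseteq> A \<and> card (S - {a}) = k" using S True fin by auto
      ultimately show ?thesis by blast
    next
      case False then show ?thesis using S by auto
    qed
  next
    fix S assume "S \<in> insert a ` {S. S \<subseteq> A \<and> card S = k} \<union> {S. S \<subseteq> A \<and> card S = Suc k}"
    then show "S \<in> {S. S \<subseteq> insert a A \<and> card S = Suc k}"
    proof
      assume "S \<in> insert a ` {S. S \<subseteq> A \<and> card S = k}"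
      then obtain x where x: "S = insert a x" "x \<subseteq> A" "card x = k" by auto
      then have "finite x" "a \<notin> x" using assms finite_subset by auto
      then show ?thesis using x by auto
    qed auto
  qed
  have fin1: "finite {S. S \<subseteq> A \<and> card S = k}" for k using assms(1) by simp
  have inj: "inj_on (insert a) {S. S \<subseteq> A \<and> card S = k}"
    using assms(2) by (auto simp: inj_on_def)
  have disj: "insert a ` {S. S \<subseteq> A \<and> card S = k} \<inter> {S. S \<subseteq> A \<and> card S = Suc k} = {}"
    using assms(2) by auto
  have "Esym (insert a A) (Suc k) h = (\<Sum>S\<in>insert a ` {S. S \<subseteq> A \<and> card S = k}. \<Prod>i\<in>S. h i) + Esym A (Suc k) h"
    unfolding Esym_def split by (rule sum.union_disjoint) (use fin1 disj in auto)
  also have "(\<Sum>S\<in>insert a ` {S. S \<subseteq> A \<and> card S = k}. \<Prod>i\<in>S. h i)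
      = (\<Sum>S\<in>{S. S \<subseteq> A \<and> card S = k}. \<Prod>i\<in>insert a S. h i)"
    by (rule sum.reindex[OF inj, unfolded comp_def])
  also have "\<dots> = (\<Sum>S\<in>{S. S \<subseteq> A \<and> card S = k}. h a * (\<Prod>i\<in>S. h i))"
    by (rule sum.cong) (use assms in \<open>auto dest: finite_subset intro: prod.insert\<close>)
  also have "\<dots> = h a * Esym A k h" by (simp add: Esym_def sum_distrib_left)
  finally show ?thesis .
qed

lemma Esym_cong: "(\<And>i. i \<in> A \<Longrightarrow> h i = h' i) \<Longrightarrow> Esym A k h = Esym A k h'"
  unfolding Esym_def by (intro sum.cong refl prod.cong) auto

definition Lin :: "'a::comm_ring_1 mpoly set \<Rightarrow> 'a mpoly set" where
  "Lin G = {(\<Sum>g\<in>T. Const (c g) * g) | T c. finite T \<and> T \<subseteq> G}"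

lemma Const_polyring: "Const c \<in> polyring N"
proof -
  have "Poly_Mapping.keys (Const c) \<subseteq> {0}" unfolding Const_def
    by (metis keys_single empty_subsetI insert_subset singletonI subset_insertI)
  then show ?thesis unfolding polyring_def vars_def by auto
qed

lemma Lin_sub: "Lin G \<subseteq> ideal_gen (polyring N) G"
proof
  fix p assume "p \<in> Lin G"
  then obtain T c where "p = (\<Sum>g\<in>T. Const (c g) * g)" "finite T" "T \<subseteq> G"
    unfolding Lin_def by blast
  then show "p \<in> ideal_gen (polyring N) G" unfolding ideal_gen_def
    using Const_polyring by fastforce
qed

lemma Lin_gen: "g \<in> G \<Longrightarrow> g \<in> Lin G"
  unfolding Lin_def
  by (rule CollectI, rule exI[of _ "{g}"], rule exI[of _ "\<lambda>_. 1"]) (simp add: Const_def)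

lemma Lin_diff:
  assumes "p \<in> Lin G" "q \<in> Lin G" shows "p - q \<in> Lin G"
proof -
  obtain T1 c1 where 1: "p = (\<Sum>g\<in>T1. Const (c1 g) * g)" "finite T1" "T1 \<subseteq> G"
    using assms(1) unfolding Lin_def by blast
  obtain T2 c2 where 2: "q = (\<Sum>g\<in>T2. Const (c2 g) * g)" "finite T2" "T2 \<subseteq> G"
    using assms(2) unfolding Lin_def by blast
  define d1 where "d1 g = (if g \<in> T1 then c1 g else 0)" for g
  define d2 where "d2 g = (if g \<in> T2 then c2 g else 0)" for g
  have p: "p = (\<Sum>g\<in>T1 \<union> T2. Const (d1 g) * g)"
    unfolding 1 by (rule sum.mono_neutral_cong_left) (auto simp: d1_def Const_def 1 2)
  have q: "q = (\<Sum>g\<in>T1 \<union> T2. Const (d2 g) * g)"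
    unfolding 2 by (rule sum.mono_neutral_cong_left) (auto simp: d2_def Const_def 1 2)
  have "p - q = (\<Sum>g\<in>T1 \<union> T2. Const (d1 g - d2 g) * g)"
    unfolding p q sum_subtractf[symmetric]
    by (rule sum.cong) (auto simp: Const_def single_diff algebra_simps)
  then show ?thesis unfolding Lin_def using 1 2
    by (intro CollectI exI[of _ "T1 \<union> T2"] exI[of _ "\<lambda>g. d1 g - d2 g"]) auto
qed

definition monoS :: "nat set \<Rightarrow> (nat \<Rightarrow>\<^sub>0 nat)" where
  "monoS S = (\<Sum>i\<in>S. Poly_Mapping.single i 1)"

lemma lookup_monoS: "finite S \<Longrightarrow> Poly_Mapping.lookup (monoS S) j = (if j \<in> S then 1 else 0)"
  unfolding monoS_def lookup_sum lookup_single by (simp add: when_def)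

lemma keys_monoS: "finite S \<Longrightarrow> Poly_Mapping.keys (monoS S) = S"
  by (auto simp: in_keys_iff lookup_monoS split: if_splits)

lemma prod_Var: "finite S \<Longrightarrow> (\<Prod>i\<in>S. Var i) = (Poly_Mapping.single (monoS S) 1 :: 'a::comm_ring_1 mpoly)"
proof (induction S rule: finite_induct)
  case empty then show ?case by (simp add: monoS_def)
next
  case (insert x F)
  then show ?case by (simp add: monoS_def Var_def mult_single)
qed

lemma perm_act_sum:
  assumes "finite M"
  shows "perm_act \<sigma> (\<Sum>m\<in>M. Poly_Mapping.single m (c m) :: 'a::comm_ring_1 mpoly)
     = (\<Sum>m\<in>M. Const (c m) * (\<Prod>i\<in>Poly_Mapping.keys m. Var (\<sigma> i) ^ Poly_Mapping.lookup m i))"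
proof -
  define p where "p = (\<Sum>m\<in>M. Poly_Mapping.single m (c m) :: 'a mpoly)"
  have lk: "Poly_Mapping.lookup p m = (if m \<in> M then c m else 0)" for m
    unfolding p_def lookup_sum lookup_single using assms by (simp add: when_def)
  have ks: "Poly_Mapping.keys p \<subseteq> M" by (auto simp: in_keys_iff lk split: if_splits)
  show ?thesis unfolding p_def[symmetric] perm_act_def
    by (rule sum.mono_neutral_cong_left[OF assms ks]) (auto simp: lk in_keys_iff Const_def)
qed

lemma perm_act_elem_sym:
  "perm_act \<sigma> (elem_sym n d :: 'a::field mpoly) = Esym {1..n} d (\<lambda>i. Var (\<sigma> i))"
proof -
  define SS where "SS = {S. S \<subseteq> {1..n} \<and> card S = d}"
  have finSS: "finite SS" unfolding SS_def by simp
  have fin: "S \<in> SS \<Longrightarrow> finite S" for S unfolding SS_def using finite_subset by auto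
  have inj: "inj_on monoS SS"
  proof (rule inj_onI)
    fix S T assume "S \<in> SS" "T \<in> SS" "monoS S = monoS T"
    then show "S = T" using keys_monoS fin by metis
  qed
  have "elem_sym n d = (\<Sum>S\<in>SS. Poly_Mapping.single (monoS S) (1::'a))"
    unfolding elem_sym_def SS_def[symmetric] by (rule sum.cong) (auto simp: prod_Var fin)
  also have "\<dots> = (\<Sum>m\<in>monoS ` SS. Poly_Mapping.single m 1)"
    by (simp add: sum.reindex[OF inj])
  finally have "perm_act \<sigma> (elem_sym n d :: 'a mpoly) = 
     (\<Sum>m\<in>monoS ` SS. Const 1 * (\<Prod>i\<in>Poly_Mapping.keys m. Var (\<sigma> i) ^ Poly_Mapping.lookup m i))"
    using perm_act_sum[of "monoS ` SS" \<sigma> "\<lambda>_. 1"] finSS by simp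
  also have "\<dots> = (\<Sum>S\<in>SS. \<Prod>i\<in>S. Var (\<sigma> i))"
    by (simp add: sum.reindex[OF inj] Const_def keys_monoS lookup_monoS fin cong: prod.cong)
  finally show ?thesis unfolding Esym_def SS_def .
qed

definition PP :: "nat \<Rightarrow> nat \<Rightarrow> nat \<Rightarrow> (nat \<Rightarrow> 'a::comm_ring_1) \<Rightarrow> 'a" where
  "PP n d j h = (\<Prod>i\<in>{1..j}. h i - h (n + i)) * Esym {Suc j..n} (d - j) h"

lemma PP_step:
  fixes h :: "nat \<Rightarrow> 'a::comm_ring_1"
  assumes "j < d" "d \<le> n"
  shows "PP n d j h - PP n d j (h \<circ> transpose (Suc j) (n + Suc j)) = PP n d (Suc j) h"
proof -
  define h' where "h' = h \<circ> transpose (Suc j) (n + Suc j)"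
  have ins: "{Suc j..n} = insert (Suc j) {Suc (Suc j)..n}" using assms by auto
  have dj: "d - j = Suc (d - Suc j)" using assms by auto
  have E: "Esym {Suc j..n} (d - j) g = g (Suc j) * Esym {Suc (Suc j)..n} (d - Suc j) g
      + Esym {Suc (Suc j)..n} (Suc (d - Suc j)) g" for g :: "nat \<Rightarrow> 'a"
    unfolding ins dj by (rule Esym_insert) auto
  have c1: "Esym {Suc (Suc j)..n} k h' = Esym {Suc (Suc j)..n} k h" for k
    by (rule Esym_cong) (auto simp: h'_def)
  have c2: "(\<Prod>i\<in>{1..j}. h' i - h' (n + i)) = (\<Prod>i\<in>{1..j}. h i - h (n + i))"
    by (rule prod.cong) (use assms in \<open>auto simp: h'_def\<close>)
  have c3: "h' (Suc j) = h (n + Suc j)" by (simp add: h'_def)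
  have pr: "(\<Prod>i\<in>{1..Suc j}. h i - h (n + i)) = (\<Prod>i\<in>{1..j}. h i - h (n + i)) * (h (Suc j) - h (n + Suc j))"
    by simp
  show ?thesis
    unfolding h'_def[symmetric] PP_def E c1 c2 c3 pr
    by (simp add: algebra_simps)
qed

theorem mainTheorem11:
  fixes n d N :: nat
  assumes "1 \<le> d" and "d \<le> n" and "n + d \<le> N"
  shows "(\<Prod>i\<in>{1..d}. Var i - Var (n + i) :: 'a::field mpoly)
           \<in> orbit_ideal N (elem_sym n d :: 'a mpoly)"
proof -
  define G where "G = {perm_act \<sigma> (elem_sym n d :: 'a mpoly) | \<sigma>. \<sigma> permutes {1..N}}"
  have main: "\<forall>\<sigma>. \<sigma> permutes {1..N} \<longrightarrow> PP n d j (\<lambda>i. Var (\<sigma> i) :: 'a mpoly) \<in> Lin G"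
    if "j \<le> d" for j
    using that
  proof (induction j)
    case 0
    show ?case
    proof (intro allI impI)
      fix \<sigma> :: "nat \<Rightarrow> nat" assume s: "\<sigma> permutes {1..N}"
      have "PP n d 0 (\<lambda>i. Var (\<sigma> i) :: 'a mpoly) = perm_act \<sigma> (elem_sym n d)"
        by (simp add: PP_def perm_act_elem_sym)
      also have "\<dots> \<in> Lin G" using s by (intro Lin_gen) (auto simp: G_def)
      finally show "PP n d 0 (\<lambda>i. Var (\<sigma> i) :: 'a mpoly) \<in> Lin G" .
    qed
  next
    case (Suc j)
    show ?case
    proof (intro allI impI)
      fix \<sigma> :: "nat \<Rightarrow> nat" assume s: "\<sigma> permutes {1..N}"
      define \<tau> where "\<tau> = transpose (Suc j) (n + Suc j)"
      have t: "\<tau> permutes {1..N}" unfolding \<tau>_def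
        by (rule permutes_swap_id) (use Suc.prems assms in auto)
      have st: "\<sigma> \<circ> \<tau> permutes {1..N}" by (rule permutes_compose[OF t s])
      have a: "PP n d j (\<lambda>i. Var (\<sigma> i) :: 'a mpoly) \<in> Lin G"
        using Suc s by auto
      have b: "PP n d j (\<lambda>i. Var ((\<sigma> \<circ> \<tau>) i) :: 'a mpoly) \<in> Lin G"
        using Suc st by auto
      have eq: "(\<lambda>i. Var ((\<sigma> \<circ> \<tau>) i) :: 'a mpoly) = (\<lambda>i. Var (\<sigma> i)) \<circ> \<tau>"
        by auto
      show "PP n d (Suc j) (\<lambda>i. Var (\<sigma> i) :: 'a mpoly) \<in> Lin G"
        using Lin_diff[OF a b] PP_step[of j d n "\<lambda>i. Var (\<sigma> i) :: 'a mpoly"] Suc.prems assms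
        by (simp add: comp_def \<tau>_def)
    qed
  qed
  have "PP n d d (\<lambda>i. Var (id i) :: 'a mpoly) \<in> Lin G"
    using main[of d] permutes_id by blast
  moreover have "PP n d d (\<lambda>i. Var (id i) :: 'a mpoly) = (\<Prod>i\<in>{1..d}. Var i - Var (n + i))"
    by (simp add: PP_def Esym_0)
  ultimately have "(\<Prod>i\<in>{1..d}. Var i - Var (n + i) :: 'a mpoly) \<in> ideal_gen (polyring N) G"
    using Lin_sub[of G N] by auto
  then show ?thesis unfolding orbit_ideal_def G_def .
qed

end
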